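(* For finite groups $G$ and $H$, $P_e(G)\cong P_e(H)$ if and only if $C(G)\cong C(H)$ and $|\mathrm{Cyc}(G)|=|\mathrm{Cyc}(H)|$.
   Context: All groups are finite. For a group $X$, the enhanced power graph $P_e(X)$ is the simple graph with vertex set $X$ in which two distinct vertices $x,y$ are adjacent if and only if $\langle x,y\rangle$ is cyclic. Let $\mathrm{Cyc}(X)=\{x\in X : \langle x,y\rangle \text{ is cyclic for all } y\in X\}$. The cyclic graph $C(X)$ is the induced subgraph of $P_e(X)$ on the vertex set $X\setminus \mathrm{Cyc}(X)$. *)

theory Defs
  imports "HOL-Algebra.Elementary_Groups"
begin

text \<open>Simple graphs are represented by a vertex set and an adjacency relation;
  only the adjacency between vertices of the vertex set matters.\<close>

definition graph_iso :: "'a set \<Rightarrow> ('a \<Rightarrow> 'a \<Rightarrow> bool) \<Rightarrow> 'b set \<Rightarrow> ('b \<Rightarrow> 'b \<Rightarrow> bool) \<Rightarrow> bool" where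
  "graph_iso V E W F \<longleftrightarrow>
     (\<exists>f. bij_betw f V W \<and> (\<forall>x\<in>V. \<forall>y\<in>V. E x y \<longleftrightarrow> F (f x) (f y)))"

definition ep_adj :: "('a, 'b) monoid_scheme \<Rightarrow> 'a \<Rightarrow> 'a \<Rightarrow> bool" where
  "ep_adj G x y \<longleftrightarrow> x \<noteq> y \<and> cyclic_group (subgroup_generated G {x, y})"

definition Cyc :: "('a, 'b) monoid_scheme \<Rightarrow> 'a set" where
  "Cyc G = {x \<in> carrier G. \<forall>y \<in> carrier G. cyclic_group (subgroup_generated G {x, y})}"

definition enh_power_graph_iso :: "('a, 'c) monoid_scheme \<Rightarrow> ('b, 'd) monoid_scheme \<Rightarrow> bool" where
  "enh_power_graph_iso G H \<longleftrightarrow> graph_iso (carrier G) (ep_adj G) (carrier H) (ep_adj H)"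

text \<open>Isomorphism of cyclic graphs C(G) and C(H): induced subgraphs of the
  enhanced power graphs on the complements of Cyc.\<close>
definition cyclic_graph_iso :: "('a, 'c) monoid_scheme \<Rightarrow> ('b, 'd) monoid_scheme \<Rightarrow> bool" where
  "cyclic_graph_iso G H \<longleftrightarrow>
     graph_iso (carrier G - Cyc G) (ep_adj G) (carrier H - Cyc H) (ep_adj H)"

end

theory Submission
  imports Defs
begin

definition univ_set :: "'a set \<Rightarrow> ('a \<Rightarrow> 'a \<Rightarrow> bool) \<Rightarrow> 'a set" where
  "univ_set V E = {x\<in>V. \<forall>y\<in>V. y \<noteq> x \<longrightarrow> E x y}"

lemma Cyc_eq:
  assumes "group G"
  shows "Cyc G = univ_set (carrier G) (ep_adj G)"
  unfolding Cyc_def univ_set_def ep_adj_def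
  using group.cyclic_group_generated[OF assms] by fastforce

lemma ep_adj_sym: "ep_adj G x y = ep_adj G y x"
  unfolding ep_adj_def by (auto simp: insert_commute)

lemma iso_univ:
  assumes "bij_betw f V W" "\<forall>x\<in>V. \<forall>y\<in>V. E x y \<longleftrightarrow> F (f x) (f y)"
  shows "f ` univ_set V E = univ_set W F"
proof
  show "f ` univ_set V E \<subseteq> univ_set W F"
  proof
    fix z assume "z \<in> f ` univ_set V E"
    then obtain x where x: "x \<in> univ_set V E" "z = f x" by blast
    have "\<forall>w\<in>W. w \<noteq> f x \<longrightarrow> F (f x) w"
    proof (intro ballI impI)
      fix w assume "w \<in> W" "w \<noteq> f x"
      then obtain y where "y \<in> V" "w = f y" using assms(1) by (metis bij_betw_iff_bijections)
      then show "F (f x) w" using x assms \<open>w \<noteq> f x\<close> unfolding univ_set_def by auto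
    qed
    then show "z \<in> univ_set W F" using x assms(1) unfolding univ_set_def
      by (auto dest: bij_betw_apply)
  qed
next
  show "univ_set W F \<subseteq> f ` univ_set V E"
  proof
    fix z assume z: "z \<in> univ_set W F"
    then obtain x where x: "x \<in> V" "z = f x" using assms(1) unfolding univ_set_def
      by (metis (no_types, lifting) bij_betw_iff_bijections mem_Collect_eq)
    have "x \<in> univ_set V E"
      unfolding univ_set_def
    proof (intro CollectI conjI ballI impI)
      fix y assume "y \<in> V" "y \<noteq> x"
      then have "f y \<noteq> f x" "f y \<in> W" using assms(1) x
        by (auto simp: bij_betw_def inj_on_def)
      then show "E x y" using z x assms(2) \<open>y \<in> V\<close> unfolding univ_set_def by auto
    qed (fact x(1))
    then show "z \<in> f ` univ_set V E" using x by blast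
  qed
qed

theorem corollary2:
  fixes G :: "('a, 'c) monoid_scheme" and H :: "('b, 'd) monoid_scheme"
  assumes "group G" "finite (carrier G)" "group H" "finite (carrier H)"
  shows "enh_power_graph_iso G H \<longleftrightarrow>
           (cyclic_graph_iso G H \<and> card (Cyc G) = card (Cyc H))"
proof
  assume "enh_power_graph_iso G H"
  then obtain f where f: "bij_betw f (carrier G) (carrier H)"
    "\<forall>x\<in>carrier G. \<forall>y\<in>carrier G. ep_adj G x y \<longleftrightarrow> ep_adj H (f x) (f y)"
    unfolding enh_power_graph_iso_def graph_iso_def by blast
  have im: "f ` Cyc G = Cyc H"
    using iso_univ[OF f] Cyc_eq[OF assms(1)] Cyc_eq[OF assms(3)] by simp
  have sub: "Cyc G \<subseteq> carrier G" unfolding Cyc_def by auto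
  have "bij_betw f (carrier G - Cyc G) (carrier H - Cyc H)"
    using f(1) im sub by (metis bij_betw_subset bij_betw_imp_inj_on bij_betw_imp_surj_on
        inj_on_image_set_diff bij_betw_def Diff_subset)
  then have "cyclic_graph_iso G H" unfolding cyclic_graph_iso_def graph_iso_def
    using f(2) by blast
  moreover have "card (Cyc G) = card (Cyc H)"
    using im f(1) sub by (metis bij_betw_def card_image inj_on_subset)
  ultimately show "cyclic_graph_iso G H \<and> card (Cyc G) = card (Cyc H)" by blast
next
  assume "cyclic_graph_iso G H \<and> card (Cyc G) = card (Cyc H)"
  then obtain f where f: "bij_betw f (carrier G - Cyc G) (carrier H - Cyc H)"
    "\<forall>x\<in>carrier G - Cyc G. \<forall>y\<in>carrier G - Cyc G. ep_adj G x y \<longleftrightarrow> ep_adj H (f x) (f y)"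
    and c: "card (Cyc G) = card (Cyc H)"
    unfolding cyclic_graph_iso_def graph_iso_def by blast
  have subG: "Cyc G \<subseteq> carrier G" and subH: "Cyc H \<subseteq> carrier H" unfolding Cyc_def by auto
  then have "finite (Cyc G)" "finite (Cyc H)" using assms finite_subset by auto
  then obtain g where g: "bij_betw g (Cyc G) (Cyc H)" using c finite_same_card_bij by blast
  define h where "h x = (if x \<in> Cyc G then g x else f x)" for x
  have hb: "bij_betw h (carrier G) (carrier H)"
  proof -
    have "bij_betw h (Cyc G \<union> (carrier G - Cyc G)) (Cyc H \<union> (carrier H - Cyc H))"
      apply (rule bij_betw_combine)
        apply (rule bij_betw_cong[THEN iffD1, OF _ g]) apply (simp add: h_def)
       apply (rule bij_betw_cong[THEN iffD1, OF _ f(1)]) apply (simp add: h_def)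
      by blast
    then show ?thesis using subG subH by (simp add: Un_absorb1 Un_Diff_cancel)
  qed
  have UG: "Cyc G = univ_set (carrier G) (ep_adj G)" and UH: "Cyc H = univ_set (carrier H) (ep_adj H)"
    using Cyc_eq assms(1,3) by auto
  have "ep_adj G x y \<longleftrightarrow> ep_adj H (h x) (h y)" if xy: "x \<in> carrier G" "y \<in> carrier G" for x y
  proof (cases "x \<in> Cyc G"; cases "y \<in> Cyc G")
    assume a: "x \<in> Cyc G" "y \<in> Cyc G"
    then have "g x \<in> Cyc H" "g y \<in> Cyc H" using g bij_betw_apply by metis+
    moreover have "g x = g y \<longleftrightarrow> x = y" using g a by (auto simp: bij_betw_def inj_on_def)
    ultimately show ?thesis using a subG subH unfolding UG UH h_def univ_set_def
      by (auto simp: ep_adj_def)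
  next
    assume a: "x \<in> Cyc G" "y \<notin> Cyc G"
    then have m: "g x \<in> Cyc H" "f y \<in> carrier H - Cyc H" using g f(1) xy bij_betw_apply by fastforce+
    then have "f y \<noteq> g x" "y \<noteq> x" using a by auto
    have "ep_adj G x y" using a xy \<open>y \<noteq> x\<close> unfolding UG univ_set_def by auto
    moreover have "ep_adj H (g x) (f y)" using m \<open>f y \<noteq> g x\<close> unfolding UH univ_set_def by auto
    ultimately show ?thesis using a unfolding h_def by auto
  next
    assume a: "x \<notin> Cyc G" "y \<in> Cyc G"
    then have m: "g y \<in> Cyc H" "f x \<in> carrier H - Cyc H" using g f(1) xy bij_betw_apply by fastforce+
    then have "f x \<noteq> g y" "y \<noteq> x" using a by auto
    have "ep_adj G y x" using a xy \<open>y \<noteq> x\<close> unfolding UG univ_set_def by auto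
    moreover have "ep_adj H (g y) (f x)" using m \<open>f x \<noteq> g y\<close> unfolding UH univ_set_def by auto
    ultimately show ?thesis using a unfolding h_def by (auto simp: ep_adj_sym)
  next
    assume a: "x \<notin> Cyc G" "y \<notin> Cyc G"
    then show ?thesis using f(2) xy unfolding h_def by auto
  qed
  then show "enh_power_graph_iso G H" unfolding enh_power_graph_iso_def graph_iso_def
    using hb by blast
qed

end
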